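(* Any cycle of spheres is toric equivalent to a toric minimal one or to one with self-intersection sequence $(-1,p)$. If $S(D)=(-1,p)$, then $Q_D$ is degenerate only if $p=-4$. Suppose $D$ is a toric minimal cycle of spheres with sequence $S(D)=(s_1,\dots,s_k)$. Then: (1) $b^+(Q_D)\ge1$ if and only if $s_i\ge0$ for some $i$; (2) $Q_D$ is negative definite if $s_i\le-2$ for all $i$ and $s_i<-2$ for some $i$; $Q_D$ is negative semi-definite but not negative definite if $s_i=-2$ for each $i$; (3) $Q_D$ is non-degenerate if either $s_1\ge0$ and $s_i\le-2$ for all $i\ge2$, or $s_1=s_2=0$ and $s_i\le-2$ for all $i\ge3$.
   Context: A cycle of spheres in a smooth oriented 4-manifold $X$ is a union $D=C_1\cup\dots\cup C_k$, $k\ge2$, of closed embedded oriented smooth spheres, cyclically labelled, intersecting transversally and positively with no triple points, such that for $k\ge3$ each $C_i$ meets exactly $C_{i-1}$ and $C_{i+1}$ once, and for $k=2$ the two spheres meet in exactly two points. $S(D)=(s_1,\dots,s_k)$ with $s_i=[C_i]\cdot[C_i]$; $Q_D=([C_i]\cdot[C_j])$ is the intersection matrix and $b^+(Q_D)$ its number of positive eigenvalues. A toric blow-up blows up $X$ at the intersection point of adjacent $C_i,C_{i+1}$ and replaces $D$ by the cycle consisting of the proper transforms (self-intersections decreased by $1$) together with the exceptional sphere (self-intersection $-1$) inserted between them; a toric blow-down is the reverse operation (blowing down a component that is a sphere of self-intersection $-1$, provided the result is again a cycle of spheres). Two cycles are toric equivalent if related by a finite sequence of toric blow-ups and blow-downs.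 $D$ is toric minimal if no component is a sphere of self-intersection $-1$. *)

theory Defs
  imports "Jordan_Normal_Form.Char_Poly"
begin

text \<open>A cycle of spheres is encoded by its self-intersection sequence s = S(D)
  (an int list of length k \<ge> 2, entry i being the self-intersection of C_(i+1)).
  The intersection matrix Q_D depends only on this sequence.\<close>

definition cyc_entry :: "int list \<Rightarrow> nat \<Rightarrow> nat \<Rightarrow> int" where
  "cyc_entry s i j =
     (let k = length s in
      if i = j then s ! i
      else if k = 2 then 2
      else if j = Suc i mod k \<or> i = Suc j mod k then 1 else 0)"

definition QD :: "int list \<Rightarrow> real mat" where
  "QD s = mat (length s) (length s) (\<lambda>(i, j). real_of_int (cyc_entry s i j))"

definition b_plus :: "real mat \<Rightarrow> nat" where
  "b_plus A = (\<Sum>x\<in>{x. x > 0 \<and> poly (char_poly A) x = 0}. order x (char_poly A))"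

definition neg_definite :: "real mat \<Rightarrow> bool" where
  "neg_definite A \<longleftrightarrow> (\<forall>v \<in> carrier_vec (dim_row A). v \<noteq> 0\<^sub>v (dim_row A) \<longrightarrow> v \<bullet> (A *\<^sub>v v) < 0)"

definition neg_semidefinite :: "real mat \<Rightarrow> bool" where
  "neg_semidefinite A \<longleftrightarrow> (\<forall>v \<in> carrier_vec (dim_row A). v \<bullet> (A *\<^sub>v v) \<le> 0)"

definition degenerate :: "real mat \<Rightarrow> bool" where
  "degenerate A \<longleftrightarrow> det A = 0"

text \<open>Toric blow-up at the intersection point of the last and the first sphere:
  (a, m..., b) becomes (a-1, m..., b-1, -1).  Blow-ups at other intersection points
  are obtained by combining with cyclic relabelling.\<close>
definition toric_blowup :: "int list \<Rightarrow> int list" where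
  "toric_blowup s = (hd s - 1) # butlast (tl s) @ [last s - 1, -1]"

text \<open>One elementary move between cycles: relabelling (rotation / reversal of the
  cyclic labelling), a toric blow-up, or a toric blow-down (inverse of a blow-up,
  which requires the result to be a cycle, i.e. of length at least 2).\<close>
definition toric_step :: "int list \<Rightarrow> int list \<Rightarrow> bool" where
  "toric_step s t \<longleftrightarrow> length s \<ge> 2 \<and> length t \<ge> 2 \<and>
     (t = rotate1 s \<or> t = rev s \<or> t = toric_blowup s \<or> s = toric_blowup t)"

definition toric_equiv :: "int list \<Rightarrow> int list \<Rightarrow> bool" where
  "toric_equiv = toric_step\<^sup>*\<^sup>*"

definition toric_minimal :: "int list \<Rightarrow> bool" where
  "toric_minimal s \<longleftrightarrow> (-1) \<notin> set s"

end

theory Submission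
  imports Defs "HOL-Analysis.Function_Topology"
begin

lemma lin_quad_nonpos:
  fixes a b :: real
  assumes "\<forall>t. a * t + b * t^2 \<le> 0"
  shows "a = 0"
proof (rule ccontr)
  assume a: "a \<noteq> 0"
  define t where "t = a / (2 * (\<bar>b\<bar> + 1))"
  have pos: "\<bar>b\<bar> + 1 > 0" by simp
  have "a * t = a^2 / (2 * (\<bar>b\<bar> + 1))" unfolding t_def by (simp add: power2_eq_square)
  moreover have "-(\<bar>b\<bar> * t^2) \<le> b * t^2"
    using mult_right_mono[of "-\<bar>b\<bar>" b "t^2"] by simp
  moreover have "\<bar>b\<bar> * t^2 = (\<bar>b\<bar> / (\<bar>b\<bar> + 1)) * (a^2 / (4 * (\<bar>b\<bar> + 1)))"
    unfolding t_def by (simp add: power2_eq_square field_simps)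
  moreover have "\<bar>b\<bar> / (\<bar>b\<bar> + 1) \<le> 1" using pos by (simp add: divide_le_eq_1)
  moreover have "a^2 > 0" using a by simp
  ultimately have "a * t + b * t^2 \<ge> a^2 / (2 * (\<bar>b\<bar> + 1)) - a^2 / (4 * (\<bar>b\<bar> + 1))"
  proof -
    assume h: "a * t = a^2 / (2 * (\<bar>b\<bar> + 1))" "-(\<bar>b\<bar> * t^2) \<le> b * t^2"
      "\<bar>b\<bar> * t^2 = (\<bar>b\<bar> / (\<bar>b\<bar> + 1)) * (a^2 / (4 * (\<bar>b\<bar> + 1)))"
      "\<bar>b\<bar> / (\<bar>b\<bar> + 1) \<le> 1" "a^2 > 0"
    have "(\<bar>b\<bar> / (\<bar>b\<bar> + 1)) * (a^2 / (4 * (\<bar>b\<bar> + 1))) \<le> a^2 / (4 * (\<bar>b\<bar> + 1))"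
      using h(4) h(5) pos by (intro mult_left_le_one_le) auto
    thus ?thesis using h by linarith
  qed
  moreover have "a^2 / (2 * (\<bar>b\<bar> + 1)) - a^2 / (4 * (\<bar>b\<bar> + 1)) = a^2 / (4 * (\<bar>b\<bar> + 1))"
  proof -
    have gen: "\<And>x c::real. c > 0 \<Longrightarrow> x/(2*c) - x/(4*c) = x/(4*c)" by (simp add: field_simps)
    show ?thesis using gen[OF pos] .
  qed
  moreover have "a^2 / (4 * (\<bar>b\<bar> + 1)) > 0"
    using pos \<open>a^2 > 0\<close> by (intro divide_pos_pos) auto
  ultimately show False using assms by (metis not_le order_less_le_trans)
qed

definition qf :: "(nat \<Rightarrow> nat \<Rightarrow> real) \<Rightarrow> nat \<Rightarrow> (nat \<Rightarrow> real) \<Rightarrow> real" where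
  "qf A n v = (\<Sum>i<n. \<Sum>j<n. A i j * v i * v j)"

definition nrm :: "nat \<Rightarrow> (nat \<Rightarrow> real) \<Rightarrow> real" where
  "nrm n v = (\<Sum>i<n. (v i)^2)"

lemma compact_sphere: "compact {v :: nat \<Rightarrow> real. (\<forall>i\<ge>n. v i = 0) \<and> nrm n v = 1}"
proof -
  define S where "S = (\<lambda>i::nat. if i < n then {-1..1::real} else {0})"
  have "compactin (powertop_real UNIV) (PiE UNIV S)"
    unfolding compactin_PiE by (auto simp: S_def)
  hence cB: "compact (Pi UNIV S)"
    by (simp add: euclidean_product_topology PiE_UNIV_domain)
  have cl: "closed {v :: nat \<Rightarrow> real. nrm n v = 1}"
    unfolding nrm_def
    by (intro closed_Collect_eq continuous_intros continuous_on_compose2[OF continuous_on_product_coordinates]) auto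
  have eq: "{v :: nat \<Rightarrow> real. (\<forall>i\<ge>n. v i = 0) \<and> nrm n v = 1} = Pi UNIV S \<inter> {v. nrm n v = 1}"
  proof (rule Set.set_eqI)
    fix v :: "nat \<Rightarrow> real"
    show "v \<in> {v. (\<forall>i\<ge>n. v i = 0) \<and> nrm n v = 1} \<longleftrightarrow> v \<in> Pi UNIV S \<inter> {v. nrm n v = 1}"
    proof
      assume v: "v \<in> {v. (\<forall>i\<ge>n. v i = 0) \<and> nrm n v = 1}"
      have "\<bar>v i\<bar> \<le> 1" if "i < n" for i
      proof -
        have "(v i)^2 \<le> (\<Sum>j<n. (v j)^2)"
          by (rule member_le_sum[of i "{..<n}" "\<lambda>j. (v j)^2", simplified]) (use that in auto)
        hence "(v i)^2 \<le> 1" using v by (simp add: nrm_def)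
        thus ?thesis using abs_square_le_1 by blast
      qed
      thus "v \<in> Pi UNIV S \<inter> {v. nrm n v = 1}" using v by (auto simp: S_def abs_le_iff)
    next
      assume "v \<in> Pi UNIV S \<inter> {v. nrm n v = 1}"
      thus "v \<in> {v. (\<forall>i\<ge>n. v i = 0) \<and> nrm n v = 1}" by (auto simp: S_def Pi_iff split: if_splits) (metis leD)
    qed
  qed
  show ?thesis unfolding eq by (rule compact_Int_closed[OF cB cl])
qed

lemma qf_expand:
  fixes A :: "nat \<Rightarrow> nat \<Rightarrow> real"
  assumes sym: "\<And>i j. i<n \<Longrightarrow> j<n \<Longrightarrow> A i j = A j i"
  shows "qf A n (\<lambda>i. u i + t * g i) = qf A n u + 2 * t * (\<Sum>i<n. g i * (\<Sum>j<n. A i j * u j)) + t^2 * qf A n g"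
proof -
  have e1: "qf A n (\<lambda>i. u i + t * g i) = qf A n u + t * (\<Sum>i<n. \<Sum>j<n. A i j * u i * g j)
     + t * (\<Sum>i<n. \<Sum>j<n. A i j * g i * u j) + t^2 * qf A n g"
    unfolding qf_def by (simp add: algebra_simps sum.distrib sum_distrib_left power2_eq_square)
  have e2: "(\<Sum>i<n. \<Sum>j<n. A i j * u i * g j) = (\<Sum>i<n. g i * (\<Sum>j<n. A i j * u j))"
  proof -
    have "(\<Sum>i<n. \<Sum>j<n. A i j * u i * g j) = (\<Sum>j<n. \<Sum>i<n. A i j * u i * g j)"
      by (rule sum.swap)
    also have "\<dots> = (\<Sum>j<n. g j * (\<Sum>i<n. A j i * u i))"
      by (intro sum.cong refl) (simp add: sum_distrib_left sym algebra_simps)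
    finally show ?thesis .
  qed
  have e3: "(\<Sum>i<n. \<Sum>j<n. A i j * g i * u j) = (\<Sum>i<n. g i * (\<Sum>j<n. A i j * u j))"
    by (simp add: sum_distrib_left algebra_simps)
  show ?thesis using e1 e2 e3 by simp
qed

lemma nrm_expand:
  "nrm n (\<lambda>i. u i + t * g i) = nrm n u + 2 * t * (\<Sum>i<n. u i * g i) + t^2 * nrm n g"
  unfolding nrm_def by (simp add: algebra_simps sum.distrib sum_distrib_left power2_eq_square)

lemma qf_scale: "qf A n (\<lambda>i. c * v i) = c^2 * qf A n v"
  unfolding qf_def by (simp add: sum_distrib_left algebra_simps power2_eq_square)

lemma nrm_scale: "nrm n (\<lambda>i. c * v i) = c^2 * nrm n v"
  unfolding nrm_def by (simp add: sum_distrib_left algebra_simps power2_eq_square)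

lemma qf_restrict: "qf A n (\<lambda>i. if i < n then v i else 0) = qf A n v"
  unfolding qf_def by (intro sum.cong refl) auto

lemma nrm_restrict: "nrm n (\<lambda>i. if i < n then v i else 0) = nrm n v"
  unfolding nrm_def by (intro sum.cong refl) auto

lemma nrm_zero: "nrm n v = 0 \<Longrightarrow> i < n \<Longrightarrow> v i = 0"
  unfolding nrm_def using sum_nonneg_eq_0_iff[of "{..<n}" "\<lambda>i. (v i)^2"] by auto

lemma qf_zero: "(\<And>i. i < n \<Longrightarrow> v i = 0) \<Longrightarrow> qf A n v = 0"
  unfolding qf_def by simp

lemma rayleigh:
  fixes A :: "nat \<Rightarrow> nat \<Rightarrow> real"
  assumes sym: "\<And>i j. i<n \<Longrightarrow> j<n \<Longrightarrow> A i j = A j i" and pos: "qf A n x > 0"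
  shows "\<exists>l>0. \<exists>u. (\<exists>i<n. u i \<noteq> 0) \<and> (\<forall>i<n. (\<Sum>j<n. A i j * u j) = l * u i)"
proof -
  define Sph where "Sph = {v :: nat \<Rightarrow> real. (\<forall>i\<ge>n. v i = 0) \<and> nrm n v = 1}"
  have n: "n > 0"
  proof (rule ccontr)
    assume "\<not> n > 0" hence "n = 0" by simp
    thus False using pos by (simp add: qf_def)
  qed
  have e0: "(\<lambda>i. if i = 0 then 1 else 0) \<in> Sph"
  proof -
    have "(\<Sum>i<n. ((if i = 0 then 1 else 0::real))^2) = (\<Sum>i<n. if i = 0 then 1 else 0)"
      by (intro sum.cong) auto
    also have "\<dots> = 1" using n by simp
    finally show ?thesis using n by (auto simp: Sph_def nrm_def)
  qed
  have cont: "continuous_on Sph (qf A n)"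
    unfolding qf_def
    by (intro continuous_intros continuous_on_compose2[OF continuous_on_product_coordinates]) auto
  have "compact (qf A n ` Sph)"
    by (rule compact_continuous_image[OF cont]) (use compact_sphere in \<open>simp add: Sph_def\<close>)
  then obtain m where m: "m \<in> qf A n ` Sph" "\<forall>y\<in>qf A n ` Sph. y \<le> m"
    using compact_attains_sup[of "qf A n ` Sph"] e0 by blast
  then obtain u where u: "u \<in> Sph" "\<And>v. v \<in> Sph \<Longrightarrow> qf A n v \<le> qf A n u"
    by auto
  define l where "l = qf A n u"
  have nu: "nrm n u = 1" using u(1) by (simp add: Sph_def)
  have homog: "qf A n v \<le> l * nrm n v" for v
  proof (cases "nrm n v = 0")
    case True
    hence "qf A n v = 0" by (intro qf_zero) (rule nrm_zero)
    thus ?thesis using True by simp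
  next
    case False
    have nn: "nrm n v \<ge> 0" unfolding nrm_def by (intro sum_nonneg) auto
    define r where "r = sqrt (nrm n v)"
    have r: "r > 0" "r^2 = nrm n v" using False nn by (auto simp: r_def)
    define w where "w = (\<lambda>i. (1/r) * (if i < n then v i else 0))"
    have "nrm n w = (1/r)^2 * nrm n v" unfolding w_def nrm_scale nrm_restrict ..
    hence "nrm n w = 1" using r False by (simp add: power_divide)
    hence "w \<in> Sph" by (auto simp: Sph_def w_def)
    hence "qf A n w \<le> l" using u(2) l_def by blast
    moreover have "qf A n w = (1/r)^2 * qf A n v" unfolding w_def qf_scale qf_restrict ..
    ultimately have "qf A n v / r^2 \<le> l" by (simp add: power_divide)
    thus ?thesis using r False nn by (simp add: divide_le_eq mult.commute)
  qed
  have lpos: "l > 0"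
  proof -
    have nn: "nrm n x \<ge> 0" unfolding nrm_def by (intro sum_nonneg) auto
    have "0 < l * nrm n x" using homog[of x] pos by simp
    thus ?thesis using nn by (simp add: zero_less_mult_iff)
  qed
  define g where "g = (\<lambda>i. (\<Sum>j<n. A i j * u j) - l * u i)"
  have key: "(\<Sum>i<n. g i * (\<Sum>j<n. A i j * u j)) - l * (\<Sum>i<n. u i * g i) = nrm n g"
    unfolding nrm_def g_def by (simp add: sum_subtractf sum_distrib_left algebra_simps power2_eq_square sum.distrib)
  have "\<forall>t. (2 * nrm n g) * t + (qf A n g - l * nrm n g) * t^2 \<le> 0"
  proof
    fix t
    have "qf A n (\<lambda>i. u i + t * g i) \<le> l * nrm n (\<lambda>i. u i + t * g i)" by (rule homog)
    hence "l + 2 * t * (\<Sum>i<n. g i * (\<Sum>j<n. A i j * u j)) + t^2 * qf A n g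
        \<le> l * (1 + 2 * t * (\<Sum>i<n. u i * g i) + t^2 * nrm n g)"
      using qf_expand[OF sym, where u=u and t=t and g=g] nrm_expand[where n=n and u=u and t=t and g=g] nu l_def by simp
    hence "2 * t * ((\<Sum>i<n. g i * (\<Sum>j<n. A i j * u j)) - l * (\<Sum>i<n. u i * g i))
         + (qf A n g - l * nrm n g) * t^2 \<le> 0"
      by (simp add: algebra_simps)
    thus "(2 * nrm n g) * t + (qf A n g - l * nrm n g) * t^2 \<le> 0"
      unfolding key by (simp add: algebra_simps)
  qed
  hence "2 * nrm n g = 0" by (rule lin_quad_nonpos)
  hence g0: "\<And>i. i < n \<Longrightarrow> g i = 0" using nrm_zero by simp
  have "\<exists>i<n. u i \<noteq> 0"
  proof (rule ccontr)
    assume "\<not> (\<exists>i<n. u i \<noteq> 0)"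
    hence "nrm n u = 0" unfolding nrm_def by simp
    thus False using nu by simp
  qed
  moreover have "\<forall>i<n. (\<Sum>j<n. A i j * u j) = l * u i" using g0 by (simp add: g_def)
  ultimately show ?thesis using lpos by blast
qed

definition Lc :: "(nat \<Rightarrow> real) \<Rightarrow> nat \<Rightarrow> (nat \<Rightarrow> real) \<Rightarrow> nat \<Rightarrow> real" where
  "Lc a k x i = a i * x i + x (Suc i mod k) + x ((i + k - 1) mod k)"

definition Bc :: "(nat \<Rightarrow> real) \<Rightarrow> nat \<Rightarrow> (nat \<Rightarrow> real) \<Rightarrow> (nat \<Rightarrow> real) \<Rightarrow> real" where
  "Bc a k u v = (\<Sum>i<k. u i * Lc a k v i)"

lemma rot_sum:
  fixes f :: "nat \<Rightarrow> 'b::comm_monoid_add"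
  assumes "0 < k"
  shows "(\<Sum>i<k. f (Suc i mod k)) = (\<Sum>i<k. f i)"
proof -
  obtain m where k: "k = Suc m" using assms by (cases k) auto
  have "(\<Sum>i<k. f (Suc i mod k)) = (\<Sum>i<m. f (Suc i mod k)) + f (Suc m mod k)"
    by (simp add: k)
  also have "(\<Sum>i<m. f (Suc i mod k)) = (\<Sum>i<m. f (Suc i))"
    by (intro sum.cong refl) (simp add: k)
  also have "f (Suc m mod k) = f 0" by (simp add: k)
  also have "(\<Sum>i<m. f (Suc i)) + f 0 = (\<Sum>i<k. f i)"
    unfolding k sum.lessThan_Suc_shift by (simp add: add.commute)
  finally show ?thesis .
qed

lemma pred_suc_mod:
  assumes "i < k"
  shows "(Suc i mod k + k - 1) mod k = i"
proof (cases "Suc i < k")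
  case True
  hence "Suc i mod k = Suc i" by simp
  hence "(Suc i mod k + k - 1) mod k = (i + k) mod k" by simp
  also have "\<dots> = i" using assms by simp
  finally show ?thesis .
next
  case False
  hence "Suc i = k" using assms by simp
  thus ?thesis by simp
qed

lemma B_alt:
  assumes "0 < k"
  shows "Bc a k u v = (\<Sum>i<k. a i * u i * v i) + (\<Sum>i<k. u i * v (Suc i mod k))
           + (\<Sum>i<k. u (Suc i mod k) * v i)"
proof -
  have "(\<Sum>i<k. u i * v ((i + k - 1) mod k)) = (\<Sum>i<k. u (Suc i mod k) * v ((Suc i mod k + k - 1) mod k))"
    using rot_sum[OF assms, of "\<lambda>i. u i * v ((i + k - 1) mod k)"] by simp
  also have "\<dots> = (\<Sum>i<k. u (Suc i mod k) * v i)"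
    by (intro sum.cong refl) (metis pred_suc_mod lessThan_iff)
  finally have h: "(\<Sum>i<k. u i * v ((i + k - 1) mod k)) = (\<Sum>i<k. u (Suc i mod k) * v i)" .
  have "Bc a k u v = (\<Sum>i<k. a i * u i * v i) + (\<Sum>i<k. u i * v (Suc i mod k))
           + (\<Sum>i<k. u i * v ((i + k - 1) mod k))"
    unfolding Bc_def Lc_def by (simp add: algebra_simps sum.distrib)
  thus ?thesis using h by simp
qed

lemma B_sym: assumes "0 < k" shows "Bc a k u v = Bc a k v u"
  using B_alt[OF assms, of a u v] B_alt[OF assms, of a v u] by (simp add: ac_simps)

lemma B_ident:
  assumes "0 < k"
  shows "Bc a k v v = (\<Sum>i<k. (a i + 2) * (v i)^2) - (\<Sum>i<k. (v i - v (Suc i mod k))^2)"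
proof -
  have r: "(\<Sum>i<k. (v (Suc i mod k))^2) = (\<Sum>i<k. (v i)^2)"
    using rot_sum[OF assms, of "\<lambda>i. (v i)^2"] by simp
  have "(\<Sum>i<k. (v i - v (Suc i mod k))^2) = (\<Sum>i<k. ((v i)^2 + (v (Suc i mod k))^2) - 2 * (v i * v (Suc i mod k)))"
    by (intro sum.cong refl) (simp add: power2_diff)
  also have "\<dots> = (\<Sum>i<k. (v i)^2 + (v (Suc i mod k))^2) - (\<Sum>i<k. 2 * (v i * v (Suc i mod k)))"
    by (rule sum_subtractf)
  also have "\<dots> = (\<Sum>i<k. (v i)^2) + (\<Sum>i<k. (v (Suc i mod k))^2) - 2 * (\<Sum>i<k. v i * v (Suc i mod k))"
    by (simp only: sum.distrib sum_distrib_left)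
  finally have h1: "(\<Sum>i<k. (v i - v (Suc i mod k))^2) = (\<Sum>i<k. (v i)^2) + (\<Sum>i<k. (v (Suc i mod k))^2) - 2 * (\<Sum>i<k. v i * v (Suc i mod k))" .
  have "(\<Sum>i<k. (a i + 2) * (v i)^2) = (\<Sum>i<k. a i * v i * v i + 2 * (v i)^2)"
    by (intro sum.cong refl) (simp add: algebra_simps power2_eq_square)
  also have "\<dots> = (\<Sum>i<k. a i * v i * v i) + 2 * (\<Sum>i<k. (v i)^2)"
    by (simp only: sum.distrib sum_distrib_left)
  finally have h2: "(\<Sum>i<k. (a i + 2) * (v i)^2) = (\<Sum>i<k. a i * v i * v i) + 2 * (\<Sum>i<k. (v i)^2)" .
  have h3: "(\<Sum>i<k. v (Suc i mod k) * v i) = (\<Sum>i<k. v i * v (Suc i mod k))"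
    by (simp add: mult.commute)
  show ?thesis using B_alt[OF assms, of a v v] r h1 h2 h3 by linarith
qed

lemma B_nonpos:
  assumes "0 < k" "\<forall>i<k. (a i + 2) * (v i)^2 \<le> 0"
  shows "Bc a k v v \<le> 0"
proof -
  have "(\<Sum>i<k. (a i + 2) * (v i)^2) \<le> 0" using assms(2) by (intro sum_nonpos) auto
  moreover have "(\<Sum>i<k. (v i - v (Suc i mod k))^2) \<ge> 0" by (intro sum_nonneg) auto
  ultimately show ?thesis unfolding B_ident[OF assms(1)] by linarith
qed

lemma chain_const:
  assumes "\<forall>i<k. v i = v (Suc i mod k)"
  shows "\<forall>i<k. v i = v 0"
proof -
  have "i < k \<longrightarrow> v i = v 0" for i
  proof (induction i)
    case 0 show ?case by simp
  next
    case (Suc i)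
    show ?case
    proof
      assume s: "Suc i < k"
      hence ik: "i < k" by simp
      have e1: "v i = v (Suc i mod k)" using assms ik by blast
      have e2: "Suc i mod k = Suc i" using s by simp
      have e3: "v i = v 0" using Suc.IH ik by blast
      show "v (Suc i) = v 0" using e1 e2 e3 by metis
    qed
  qed
  thus ?thesis by blast
qed

lemma B_eq:
  assumes "0 < k" "\<forall>i<k. (a i + 2) * (v i)^2 \<le> 0" "Bc a k v v \<ge> 0"
  shows "(\<forall>i<k. v i = v 0) \<and> (\<forall>i<k. (a i + 2) * (v i)^2 = 0)"
proof -
  have T: "(\<Sum>i<k. (a i + 2) * (v i)^2) \<le> 0" using assms(2) by (intro sum_nonpos) auto
  have D: "(\<Sum>i<k. (v i - v (Suc i mod k))^2) \<ge> 0" by (intro sum_nonneg) auto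
  have T0: "(\<Sum>i<k. (a i + 2) * (v i)^2) = 0" and D0: "(\<Sum>i<k. (v i - v (Suc i mod k))^2) = 0"
    using T D assms(3) unfolding B_ident[OF assms(1)] by linarith+
  have "\<forall>i\<in>{..<k}. (v i - v (Suc i mod k))^2 = 0"
    using D0 sum_nonneg_eq_0_iff[of "{..<k}" "\<lambda>i. (v i - v (Suc i mod k))^2"] by (simp only: finite_lessThan zero_le_power2 simp_thms)
  hence "\<forall>i<k. v i = v (Suc i mod k)"
  proof (intro allI impI)
    fix i assume a: "\<forall>i\<in>{..<k}. (v i - v (Suc i mod k))^2 = 0" and "i < k"
    hence "(v i - v (Suc i mod k))^2 = 0" by blast
    hence "v i - v (Suc i mod k) = 0" by (simp only: power_eq_0_iff zero_less_numeral)
    thus "v i = v (Suc i mod k)" by simp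
  qed
  hence "\<forall>i<k. v i = v 0" by (rule chain_const)
  moreover have "\<forall>i<k. (a i + 2) * (v i)^2 = 0"
  proof -
    have "\<forall>i<k. -((a i + 2) * (v i)^2) = 0"
      using T0 sum_nonneg_eq_0_iff[of "{..<k}" "\<lambda>i. -((a i + 2) * (v i)^2)"] assms(2)
      by (auto simp: sum_negf)
    thus ?thesis by simp
  qed
  ultimately show ?thesis by blast
qed

lemma L_lin: "Lc a k (\<lambda>i. x i + c * y i) j = Lc a k x j + c * Lc a k y j"
  unfolding Lc_def by (simp add: algebra_simps)

lemma B_lin2: "Bc a k u (\<lambda>i. x i + c * y i) = Bc a k u x + c * Bc a k u y"
  unfolding Bc_def L_lin by (simp add: algebra_simps sum.distrib sum_distrib_left)

lemma B_unit: assumes "j < k" shows "Bc a k (\<lambda>i. if i = j then 1 else 0) v = Lc a k v j"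
proof -
  have "Bc a k (\<lambda>i. if i = j then 1 else 0) v = (\<Sum>i<k. if i = j then Lc a k v i else 0)"
    unfolding Bc_def by (intro sum.cong) auto
  thus ?thesis using assms by simp
qed

definition sr :: "int list \<Rightarrow> nat \<Rightarrow> real" where "sr s i = real_of_int (s ! i)"

lemma sucmod: "i < k \<Longrightarrow> Suc i mod k = (if Suc i = k then 0 else Suc i)"
  by auto

lemma predmod: fixes i k :: nat assumes "i < k" shows "(i + k - 1) mod k = (if i = 0 then k - 1 else i - 1)"
proof (cases "i = 0")
  case True
  have "k - 1 < k" using assms by linarith
  thus ?thesis using True by simp
next
  case False
  hence "i + k - 1 = (i - 1) + k" by simp
  hence "(i + k - 1) mod k = (i - 1) mod k" by simp
  thus ?thesis using False assms by simp
qed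

lemma entry_eq:
  assumes k: "2 \<le> length s" and i: "i < length s" and j: "j < length s"
  shows "real_of_int (cyc_entry s i j) = (if j = i then sr s i else 0)
     + (if j = Suc i mod length s then 1 else 0) + (if j = (i + length s - 1) mod length s then 1 else 0)"
  using k i j unfolding cyc_entry_def Let_def sucmod[OF i] sucmod[OF j] predmod[OF i] Let_def sr_def
  by (cases "length s = 2") auto

lemma row_eq:
  assumes k: "2 \<le> length s" and i: "i < length s"
  shows "(\<Sum>j<length s. real_of_int (cyc_entry s i j) * x j) = Lc (sr s) (length s) x i"
proof -
  let ?k = "length s"
  have "(\<Sum>j<?k. real_of_int (cyc_entry s i j) * x j) =
     (\<Sum>j<?k. (if j = i then sr s i * x j else 0) + (if j = Suc i mod ?k then x j else 0)
        + (if j = (i + ?k - 1) mod ?k then x j else 0))"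
    by (intro sum.cong refl) (simp add: entry_eq[OF k i] distrib_right)
  also have "\<dots> = (\<Sum>j<?k. if j = i then sr s i * x j else 0) + (\<Sum>j<?k. if j = Suc i mod ?k then x j else 0)
        + (\<Sum>j<?k. if j = (i + ?k - 1) mod ?k then x j else 0)"
    by (simp only: sum.distrib)
  also have "\<dots> = sr s i * x i + x (Suc i mod ?k) + x ((i + ?k - 1) mod ?k)"
  proof -
    have kp: "0 < ?k" using k by linarith
    have "Suc i mod ?k < ?k" "(i + ?k - 1) mod ?k < ?k" using mod_less_divisor[OF kp] by blast+
    thus ?thesis using i k by (simp add: sum.delta del: One_nat_def)
  qed
  finally show ?thesis unfolding Lc_def .
qed

lemma QD_index: "i < length s \<Longrightarrow> j < length s \<Longrightarrow> QD s $$ (i, j) = real_of_int (cyc_entry s i j)"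
  unfolding QD_def by simp

lemma QD_carrier: "QD s \<in> carrier_mat (length s) (length s)"
  unfolding QD_def by simp

lemma mulJ:
  assumes k: "2 \<le> length s" and v: "v \<in> carrier_vec (length s)" and i: "i < length s"
  shows "(QD s *\<^sub>v v) $ i = Lc (sr s) (length s) (\<lambda>j. v $ j) i"
proof -
  have "(QD s *\<^sub>v v) $ i = (\<Sum>j\<in>{0..<length s}. QD s $$ (i, j) * v $ j)"
    using v i unfolding QD_def by (simp add: scalar_prod_def)
  also have "\<dots> = (\<Sum>j<length s. real_of_int (cyc_entry s i j) * v $ j)"
    using i by (simp add: atLeast0LessThan QD_index)
  also have "\<dots> = Lc (sr s) (length s) (\<lambda>j. v $ j) i" by (rule row_eq[OF k i])
  finally show ?thesis .
qed

lemma quadJ: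
  assumes k: "2 \<le> length s" and v: "v \<in> carrier_vec (length s)"
  shows "v \<bullet> (QD s *\<^sub>v v) = Bc (sr s) (length s) (\<lambda>j. v $ j) (\<lambda>j. v $ j)"
proof -
  have "v \<bullet> (QD s *\<^sub>v v) = (\<Sum>i\<in>{0..<length s}. v $ i * (QD s *\<^sub>v v) $ i)"
    unfolding scalar_prod_def using QD_carrier[of s] by simp
  also have "\<dots> = (\<Sum>i<length s. v $ i * Lc (sr s) (length s) (\<lambda>j. v $ j) i)"
    by (intro sum.cong) (auto simp: mulJ[OF k v])
  finally show ?thesis unfolding Bc_def .
qed

lemma chain2:
  assumes "\<forall>i. m \<le> i \<and> Suc i \<le> n \<longrightarrow> y i = y (Suc i)"
  shows "\<forall>i. m \<le> i \<and> i \<le> n \<longrightarrow> y i = y m"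
proof -
  have "m \<le> i \<and> i \<le> n \<longrightarrow> y i = y m" for i
  proof (induction i)
    case 0 thus ?case by simp
  next
    case (Suc i)
    show ?case
    proof
      assume h: "m \<le> Suc i \<and> Suc i \<le> n"
      show "y (Suc i) = y m"
      proof (cases "m = Suc i")
        case True thus ?thesis by simp
      next
        case False
        hence mi: "m \<le> i" using h by simp
        have e1: "y i = y (Suc i)" using assms mi h by blast
        have e2: "y i = y m" using Suc.IH mi h by simp
        show ?thesis using e1 e2 by simp
      qed
    qed
  qed
  thus ?thesis by blast
qed

lemma K1:
  assumes k: "2 \<le> k" and a0: "a 0 \<ge> 0" and ai: "\<forall>i. 1 \<le> i \<and> i < k \<longrightarrow> a i \<le> -2"
    and L0: "\<forall>i<k. Lc a k x i = 0"
  shows "\<forall>i<k. x i = 0"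
proof -
  have kp: "0 < k" using k by simp
  define y where "y = (\<lambda>i. if i = 0 then 0 else x i)"
  define e0 where "e0 = (\<lambda>i::nat. if i = 0 then 1 else (0::real))"
  have hx: "(\<lambda>i. y i + x 0 * e0 i) = x" by (rule ext) (simp add: y_def e0_def)
  have B0: "Bc a k y x = 0" unfolding Bc_def using L0 by simp
  have B1: "Bc a k y x = Bc a k y y + x 0 * Bc a k y e0"
    using B_lin2[of a k y y "x 0" e0] unfolding hx .
  have B2: "Bc a k y e0 = Lc a k y 0"
    using B_sym[OF kp, of a y e0] B_unit[OF kp, of a y] by (simp add: e0_def)
  have B3: "Lc a k y 0 = x 1 + x (k - 1)"
  proof -
    have "Suc 0 mod k = 1" using k by simp
    moreover have "(0 + k - 1) mod k = k - 1" using k by simp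
    ultimately show ?thesis unfolding Lc_def using k by (simp add: y_def)
  qed
  have B4: "a 0 * x 0 + x 1 + x (k - 1) = 0"
  proof -
    have "Suc 0 mod k = 1" using k by simp
    moreover have "(0 + k - 1) mod k = k - 1" using k by simp
    ultimately show ?thesis using L0 kp unfolding Lc_def by force
  qed
  have "Bc a k y y = - (x 0 * (x 1 + x (k - 1)))" using B0 B1 B2 B3 by simp
  also have "x 1 + x (k - 1) = - (a 0 * x 0)" using B4 by linarith
  finally have "Bc a k y y = a 0 * (x 0)^2" by (simp add: power2_eq_square)
  hence "Bc a k y y \<ge> 0" using a0 by simp
  moreover have "\<forall>i<k. (a i + 2) * (y i)^2 \<le> 0"
  proof (intro allI impI)
    fix i assume i: "i < k"
    show "(a i + 2) * (y i)^2 \<le> 0"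
    proof (cases "i = 0")
      case True thus ?thesis by (simp add: y_def)
    next
      case False
      have "a i \<le> -2" using ai[rule_format, of i] i False by simp
      hence "a i + 2 \<le> 0" by simp
      thus ?thesis by (simp add: mult_nonpos_nonneg)
    qed
  qed
  ultimately have "\<forall>i<k. y i = y 0" using B_eq[OF kp] by blast
  hence xi: "\<forall>i. 1 \<le> i \<and> i < k \<longrightarrow> x i = 0" by (auto simp: y_def)
  have "Lc a k x 1 = 0" using L0 k by simp
  moreover have "(1 + k - 1) mod k = 0" by simp
  ultimately have "a 1 * x 1 + x (Suc 1 mod k) + x 0 = 0" unfolding Lc_def by simp
  hence "x (Suc 1 mod k) + x 0 = 0" using xi k by simp
  moreover have "x (Suc 1 mod k) = x 0 \<or> x (Suc 1 mod k) = 0"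
  proof (cases "k = 2")
    case True thus ?thesis by simp
  next
    case False
    hence "Suc 1 mod k = 2" using k by simp
    thus ?thesis using xi k False by simp
  qed
  ultimately have "x 0 = 0" by linarith
  thus ?thesis using xi by (metis less_one not_less)
qed

lemma K2:
  assumes k: "2 \<le> k" and a0: "a 0 = 0" and a1: "a 1 = 0" and ai: "\<forall>i. 2 \<le> i \<and> i < k \<longrightarrow> a i \<le> -2"
    and L0: "\<forall>i<k. Lc a k x i = 0"
  shows "\<forall>i<k. x i = 0"
proof (cases "k = 2")
  case True
  have "Lc a k x 0 = 0" "Lc a k x 1 = 0" using L0 True by auto
  hence "x 1 + x 1 = 0" "x 0 + x 0 = 0" using True a0 a1 unfolding Lc_def by simp_all
  hence "x 0 = 0" "x 1 = 0" by simp_all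
  thus ?thesis using True by (metis One_nat_def less_2_cases)
next
  case False
  hence k3: "3 \<le> k" using k by simp
  have kp: "0 < k" using k by simp
  define y where "y = (\<lambda>i. if i \<le> 1 then 0 else x i)"
  define e0 where "e0 = (\<lambda>i::nat. if i = 0 then 1 else (0::real))"
  define e1 where "e1 = (\<lambda>i::nat. if i = 1 then 1 else (0::real))"
  have hx1: "(\<lambda>i. y i + x 0 * e0 i) = (\<lambda>i. if i = 1 then 0 else x i)"
    by (rule ext) (auto simp: y_def e0_def le_Suc_eq)
  have hx2: "(\<lambda>i. (if i = 1 then 0 else x i) + x 1 * e1 i) = x"
    by (rule ext) (simp add: e1_def)
  have m1: "Suc 0 mod k = 1" using k by simp
  have m2: "(0 + k - 1) mod k = k - 1" using k by simp
  have m3: "Suc 1 mod k = 2" using k3 by simp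
  have m4: "(1 + k - 1) mod k = 0" by simp
  have B0: "Bc a k y x = 0" unfolding Bc_def using L0 by simp
  have B1: "Bc a k y x = Bc a k y y + x 0 * Bc a k y e0 + x 1 * Bc a k y e1"
    using B_lin2[of a k y "\<lambda>i. if i = 1 then 0 else x i" "x 1" e1] B_lin2[of a k y y "x 0" e0]
    unfolding hx1 hx2 by simp
  have B2: "Bc a k y e0 = Lc a k y 0"
    using B_sym[OF kp, of a y e0] B_unit[OF kp, of a y] by (simp add: e0_def)
  have B2': "Bc a k y e1 = Lc a k y 1"
    using B_sym[OF kp, of a y e1] B_unit[of 1 k a y] k by (simp add: e1_def)
  have B3: "Lc a k y 0 = x (k - 1)"
    unfolding Lc_def using k3 m1 m2 by (simp add: y_def)
  have B3': "Lc a k y 1 = x 2"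
    unfolding Lc_def using k3 m3 m4 by (simp add: y_def numeral_2_eq_2)
  have B4: "x 1 + x (k - 1) = 0"
    using L0 kp m1 m2 a0 unfolding Lc_def by force
  have B4': "x 2 + x 0 = 0"
  proof -
    have "Lc a k x 1 = 0" using L0 k by simp
    thus ?thesis using m3 m4 a1 unfolding Lc_def by simp
  qed
  have Byy: "Bc a k y y = 2 * (x 2 * x (k - 1))"
  proof -
    have h: "Bc a k y y = - (x 0 * x (k - 1)) - x 1 * x 2" using B0 B1 B2 B2' B3 B3' by simp
    have h0: "x 0 = - x 2" using B4' by simp
    have h1: "x 1 = - x (k - 1)" using B4 by simp
    show ?thesis unfolding h h0 h1 by simp
  qed
  define d where "d = (\<lambda>i. (y i - y (Suc i mod k))^2)"
  define A where "A = {..<k} - {1, k - 1}"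
  have T: "(\<Sum>i<k. (a i + 2) * (y i)^2) \<le> 0"
  proof (intro sum_nonpos)
    fix i assume i: "i \<in> {..<k}"
    show "(a i + 2) * (y i)^2 \<le> 0"
    proof (cases "i \<le> 1")
      case True thus ?thesis by (simp add: y_def)
    next
      case False
      have "a i \<le> -2" using ai[rule_format, of i] i False by simp
      hence "a i + 2 \<le> 0" by simp
      thus ?thesis by (simp add: mult_nonpos_nonneg)
    qed
  qed
  have Dsplit: "(\<Sum>i<k. d i) = (\<Sum>i\<in>A. d i) + d 1 + d (k - 1)"
  proof -
    have sub: "{1, k - 1} \<subseteq> {..<k}" using k by auto
    have "(\<Sum>i<k. d i) = (\<Sum>i\<in>A. d i) + (\<Sum>i\<in>{1, k - 1}. d i)"
      unfolding A_def by (rule sum.subset_diff[OF sub]) simp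
    moreover have "(\<Sum>i\<in>{1, k - 1}. d i) = d 1 + d (k - 1)" using k3 by simp
    ultimately show ?thesis by simp
  qed
  have d1: "d 1 = (x 2)^2" unfolding d_def y_def using m3 by simp
  have dk: "d (k - 1) = (x (k - 1))^2"
  proof -
    have "Suc (k - 1) mod k = 0" using k by simp
    thus ?thesis unfolding d_def y_def using k3 by simp
  qed
  have R: "(\<Sum>i\<in>A. d i) \<ge> 0" unfolding d_def by (intro sum_nonneg) auto
  have BI: "Bc a k y y = (\<Sum>i<k. (a i + 2) * (y i)^2) - (\<Sum>i<k. d i)"
    unfolding d_def by (rule B_ident[OF kp])
  hence eq: "(\<Sum>i<k. (a i + 2) * (y i)^2) - (\<Sum>i\<in>A. d i) = (x 2 + x (k - 1))^2"
  proof -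
    have "(x 2 + x (k - 1))^2 = (x 2)^2 + (x (k - 1))^2 + 2 * (x 2 * x (k - 1))"
      by (simp add: power2_eq_square algebra_simps)
    thus ?thesis using Byy Dsplit d1 dk BI by linarith
  qed
  have sq: "(x 2 + x (k - 1))^2 \<ge> 0" by simp
  have R0: "(\<Sum>i\<in>A. d i) = 0" and S0: "(x 2 + x (k - 1))^2 = 0"
    using eq T R sq by linarith+
  have dA: "\<forall>i\<in>A. d i = 0"
    using R0 sum_nonneg_eq_0_iff[of A d] unfolding A_def d_def
    by (simp only: finite_Diff finite_lessThan zero_le_power2 simp_thms)
  have steps: "\<forall>i. 2 \<le> i \<and> Suc i \<le> k - 1 \<longrightarrow> y i = y (Suc i)"
  proof (intro allI impI)
    fix i assume i: "2 \<le> i \<and> Suc i \<le> k - 1"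
    hence "i \<in> A" unfolding A_def by auto
    hence "d i = 0" using dA by blast
    hence "y i - y (Suc i mod k) = 0" unfolding d_def by (simp only: power_eq_0_iff zero_less_numeral)
    moreover have "Suc i < k" using i by linarith
    hence "Suc i mod k = Suc i" by simp
    ultimately show "y i = y (Suc i)" by simp
  qed
  have ch: "\<forall>i. 2 \<le> i \<and> i \<le> k - 1 \<longrightarrow> y i = y 2"
    by (rule chain2[OF steps])
  have "2 \<le> k - 1 \<and> k - 1 \<le> k - 1" using k3 by simp
  hence "y (k - 1) = y 2" using ch by blast
  hence "(if k - 1 \<le> 1 then 0 else x (k - 1)) = (if (2::nat) \<le> 1 then 0 else x 2)" unfolding y_def .
  moreover have "\<not> k - 1 \<le> 1" using k3 by simp
  ultimately have xe: "x (k - 1) = x 2" by (simp only: if_False) simp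
  have "x 2 + x (k - 1) = 0" using S0 by simp
  hence x2: "x 2 = 0" using xe by simp
  have xmid: "\<forall>i. 2 \<le> i \<and> i < k \<longrightarrow> x i = 0"
  proof (intro allI impI)
    fix i assume i: "2 \<le> i \<and> i < k"
    hence "2 \<le> i \<and> i \<le> k - 1" by linarith
    hence "y i = y 2" using ch by blast
    thus "x i = 0" using i x2 unfolding y_def by simp
  qed
  have "x 0 = 0" using B4' x2 by simp
  moreover have "x 1 = 0" using B4 xe x2 by simp
  ultimately show ?thesis
  proof (intro allI impI)
    fix i assume "x 0 = 0" "x 1 = 0" "i < k"
    thus "x i = 0" using xmid by (cases "i \<le> 1") (auto simp: le_Suc_eq)
  qed
qed

lemma cyc_sym: "cyc_entry s i j = cyc_entry s j i"
  unfolding cyc_entry_def Let_def by auto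

lemma nonzero_vec:
  assumes "v \<in> carrier_vec n" "v \<noteq> 0\<^sub>v n"
  shows "\<exists>i<n. v $ i \<noteq> 0"
proof (rule ccontr)
  assume "\<not> (\<exists>i<n. v $ i \<noteq> 0)"
  hence "v = 0\<^sub>v n" using assms(1) by (intro eq_vecI) auto
  thus False using assms(2) by simp
qed

lemma mulJ0:
  assumes v: "v \<in> carrier_vec (length s)" and i: "i < length s"
  shows "(QD s *\<^sub>v v) $ i = (\<Sum>j<length s. real_of_int (cyc_entry s i j) * v $ j)"
proof -
  have "(QD s *\<^sub>v v) $ i = (\<Sum>j\<in>{0..<length s}. QD s $$ (i, j) * v $ j)"
    using v i unfolding QD_def by (simp add: scalar_prod_def)
  also have "\<dots> = (\<Sum>j<length s. real_of_int (cyc_entry s i j) * v $ j)"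
    using i by (simp add: atLeast0LessThan QD_index)
  finally show ?thesis .
qed

lemma sum_delta_mult:
  fixes n i :: nat
  shows "(\<Sum>b<n. f b * (if b = i then 1 else (0::real))) = (if i < n then f i else 0)"
proof -
  have "(\<Sum>b<n. f b * (if b = i then 1 else (0::real))) = (\<Sum>b<n. if b = i then f b else 0)"
    by (intro sum.cong refl) auto
  thus ?thesis using sum.delta[of "{..<n}" i f] by simp
qed

lemma qf_unit:
  assumes "i < n"
  shows "qf A n (\<lambda>m. if m = i then 1 else 0) = A i i"
proof -
  have "qf A n (\<lambda>m. if m = i then 1 else 0) = (\<Sum>a<n. A a i * (if a = i then 1 else 0))"
    unfolding qf_def using assms
    by (intro sum.cong refl) (simp add: sum_delta_mult)
  also have "\<dots> = A i i" using assms by (simp add: sum_delta_mult)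
  finally show ?thesis .
qed

lemma cross_unit:
  fixes i j n :: nat and A :: "nat \<Rightarrow> nat \<Rightarrow> real"
  assumes "i < n" "j < n"
  shows "(\<Sum>m<n. (if m = j then 1 else 0) * (\<Sum>b<n. A m b * (if b = i then 1 else 0))) = A j i"
proof -
  have "(\<Sum>m<n. (if m = j then 1 else 0) * (\<Sum>b<n. A m b * (if b = i then 1 else 0)))
      = (\<Sum>m<n. A m i * (if m = j then 1 else 0))"
    by (intro sum.cong refl) (simp add: sum_delta_mult assms)
  also have "\<dots> = A j i" using assms by (simp add: sum_delta_mult)
  finally show ?thesis .
qed

lemma eig_from_form:
  assumes k: "2 \<le> length s"
    and pos: "qf (\<lambda>i j. real_of_int (cyc_entry s i j)) (length s) x > 0"
  shows "\<exists>l>0. poly (char_poly (QD s)) l = 0"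
proof -
  let ?A = "\<lambda>i j. real_of_int (cyc_entry s i j)"
  let ?k = "length s"
  obtain l u where l: "l > 0" and u: "\<exists>i<?k. u i \<noteq> 0"
      and eig: "\<forall>i<?k. (\<Sum>j<?k. ?A i j * u j) = l * u i"
    using rayleigh[of ?k ?A x] pos cyc_sym by metis
  define v where "v = vec ?k u"
  have vc: "v \<in> carrier_vec ?k" unfolding v_def by simp
  have vnz: "v \<noteq> 0\<^sub>v ?k"
  proof
    assume "v = 0\<^sub>v ?k"
    then obtain i where "i < ?k" "u i \<noteq> 0" "v $ i = 0" using u by auto
    thus False unfolding v_def by simp
  qed
  have "QD s *\<^sub>v v = l \<cdot>\<^sub>v v"
  proof (rule eq_vecI)
    show "dim_vec (QD s *\<^sub>v v) = dim_vec (l \<cdot>\<^sub>v v)" using vc QD_carrier[of s] by simp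
    fix i assume "i < dim_vec (l \<cdot>\<^sub>v v)"
    hence i: "i < ?k" using vc by simp
    have "(QD s *\<^sub>v v) $ i = (\<Sum>j<?k. ?A i j * v $ j)" by (rule mulJ0[OF vc i])
    also have "\<dots> = (\<Sum>j<?k. ?A i j * u j)" unfolding v_def by (intro sum.cong refl) simp
    also have "\<dots> = l * u i" using eig i by simp
    also have "\<dots> = (l \<cdot>\<^sub>v v) $ i" using i unfolding v_def by simp
    finally show "(QD s *\<^sub>v v) $ i = (l \<cdot>\<^sub>v v) $ i" .
  qed
  hence "eigenvector (QD s) v l" unfolding eigenvector_def using vc vnz QD_carrier[of s] by simp
  hence "eigenvalue (QD s) l" unfolding eigenvalue_def by blast
  hence "poly (char_poly (QD s)) l = 0" using eigenvalue_root_char_poly[OF QD_carrier] by blast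
  thus ?thesis using l by blast
qed

lemma bplus_iff:
  assumes A: "A \<in> carrier_mat n n"
  shows "b_plus A \<ge> 1 \<longleftrightarrow> (\<exists>l>0. poly (char_poly A) l = 0)"
proof -
  let ?p = "char_poly A"
  let ?R = "{x. x > 0 \<and> poly ?p x = 0}"
  have p0: "?p \<noteq> 0" using degree_monic_char_poly[OF A] by auto
  have fin: "finite ?R"
    by (rule finite_subset[OF _ poly_roots_finite[OF p0]]) auto
  show ?thesis
  proof
    assume "b_plus A \<ge> 1"
    hence "?R \<noteq> {}" unfolding b_plus_def by (metis not_one_le_zero sum.empty)
    thus "\<exists>l>0. poly ?p l = 0" by auto
  next
    assume "\<exists>l>0. poly ?p l = 0"
    then obtain l where l: "l \<in> ?R" by auto
    have "order l ?p \<noteq> 0" using l p0 order_root[of ?p l] by auto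
    moreover have "order l ?p \<le> b_plus A"
      unfolding b_plus_def by (rule member_le_sum[OF l _ fin]) auto
    ultimately show "b_plus A \<ge> 1" by simp
  qed
qed

lemma no_pos_eig:
  assumes k: "2 \<le> length s" and neg: "\<forall>i<length s. s ! i \<le> -2"
    and root: "poly (char_poly (QD s)) l = 0"
  shows "l \<le> 0"
proof (rule ccontr)
  assume "\<not> l \<le> 0" hence l: "l > 0" by simp
  let ?k = "length s"
  have "eigenvalue (QD s) l" using eigenvalue_root_char_poly[OF QD_carrier] root by blast
  then obtain v where ev: "eigenvector (QD s) v l" unfolding eigenvalue_def by blast
  have dr: "dim_row (QD s) = ?k" using QD_carrier[of s] by simp
  have vc: "v \<in> carrier_vec ?k" and vnz: "v \<noteq> 0\<^sub>v ?k" and mv: "QD s *\<^sub>v v = l \<cdot>\<^sub>v v"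
    using ev unfolding eigenvector_def dr by auto
  have "v \<bullet> (QD s *\<^sub>v v) = Bc (sr s) ?k (\<lambda>j. v $ j) (\<lambda>j. v $ j)" by (rule quadJ[OF k vc])
  also have "\<dots> \<le> 0"
  proof (rule B_nonpos)
    show "0 < ?k" using k by linarith
    show "\<forall>i<?k. (sr s i + 2) * (v $ i)^2 \<le> 0"
    proof (intro allI impI)
      fix i assume "i < ?k"
      hence "s ! i \<le> -2" using neg by blast
      hence "sr s i \<le> -2" unfolding sr_def by simp
      thus "(sr s i + 2) * (v $ i)^2 \<le> 0" by (simp add: mult_nonpos_nonneg)
    qed
  qed
  finally have le: "v \<bullet> (QD s *\<^sub>v v) \<le> 0" .
  obtain i where i: "i < ?k" "v $ i \<noteq> 0" using nonzero_vec[OF vc vnz] by blast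
  have "v \<bullet> (QD s *\<^sub>v v) = (\<Sum>j\<in>{0..<?k}. v $ j * (l * v $ j))"
    unfolding mv scalar_prod_def using vc by simp
  also have "\<dots> = l * (\<Sum>j\<in>{0..<?k}. (v $ j)^2)"
    by (simp add: sum_distrib_left power2_eq_square algebra_simps)
  finally have eq: "v \<bullet> (QD s *\<^sub>v v) = l * (\<Sum>j\<in>{0..<?k}. (v $ j)^2)" .
  have "(v $ i)^2 \<le> (\<Sum>j\<in>{0..<?k}. (v $ j)^2)"
    by (rule member_le_sum) (use i in auto)
  moreover have "(v $ i)^2 > 0" using i by simp
  ultimately have "(\<Sum>j\<in>{0..<?k}. (v $ j)^2) > 0" by linarith
  hence "v \<bullet> (QD s *\<^sub>v v) > 0" unfolding eq using l by simp
  thus False using le by simp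
qed

lemma pos_form:
  assumes k: "2 \<le> length s" and i: "i < length s" and si: "s ! i \<ge> 0"
  shows "\<exists>x. qf (\<lambda>i j. real_of_int (cyc_entry s i j)) (length s) x > 0"
proof -
  define A where "A = (\<lambda>i j. real_of_int (cyc_entry s i j))"
  define n where "n = length s"
  have Aii: "A i i = real_of_int (s ! i)" unfolding A_def cyc_entry_def by simp
  have i': "i < n" using i n_def by simp
  have "\<exists>x. qf A n x > 0"
  proof (cases "s ! i > 0")
    case True
    have "qf A n (\<lambda>m. if m = i then 1 else 0) = A i i" by (rule qf_unit[OF i'])
    hence "qf A n (\<lambda>m. if m = i then 1 else 0) > 0" using True Aii by simp
    thus ?thesis by blast
  next
    case False
    hence s0: "s ! i = 0" using si by simp
    define j where "j = Suc i mod n"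
    have kp: "0 < n" using k n_def by linarith
    have j: "j < n" unfolding j_def using kp by simp
    have ji: "j \<noteq> i"
    proof (cases "Suc i < n")
      case True thus ?thesis unfolding j_def by simp
    next
      case False
      hence "Suc i = n" using i' by simp
      hence "j = 0" "i \<noteq> 0" unfolding j_def using k n_def by auto
      thus ?thesis by simp
    qed
    have c: "A j i \<ge> 1"
    proof -
      have "cyc_entry s j i = (if length s = 2 then 2 else 1)"
        using ji unfolding cyc_entry_def Let_def j_def n_def by simp
      thus ?thesis unfolding A_def by simp
    qed
    define d where "d = A j j"
    define t where "t = 1 / (\<bar>d\<bar> + 1)"
    have dd: "\<bar>d\<bar> + 1 > 0" by simp
    have tpos: "t > 0" unfolding t_def using dd by simp
    have td: "t * \<bar>d\<bar> \<le> 1" unfolding t_def using dd by (simp add: divide_le_eq_1)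
    have sym: "\<And>a b. a < n \<Longrightarrow> b < n \<Longrightarrow> A a b = A b a" unfolding A_def using cyc_sym by metis
    have "qf A n (\<lambda>m. (if m = i then 1 else 0) + t * (if m = j then 1 else 0))
        = qf A n (\<lambda>m. if m = i then 1 else 0) + 2 * t * (\<Sum>m<n. (if m = j then 1 else 0) * (\<Sum>b<n. A m b * (if b = i then 1 else 0)))
          + t^2 * qf A n (\<lambda>m. if m = j then 1 else 0)"
      by (rule qf_expand[OF sym])
    also have "\<dots> = A i i + 2 * t * A j i + t^2 * d"
      unfolding qf_unit[OF i'] qf_unit[OF j] cross_unit[OF i' j] d_def ..
    also have "A i i = 0" using Aii s0 by simp
    finally have q: "qf A n (\<lambda>m. (if m = i then 1 else 0) + t * (if m = j then 1 else 0))
        = 2 * t * A j i + t^2 * d" by simp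
    have "2 * t * 1 \<le> 2 * t * A j i" using c tpos by (intro mult_left_mono) auto
    moreover have "t^2 * d \<ge> - t"
    proof -
      have "- d \<le> \<bar>d\<bar>" by simp
      hence "t^2 * (- d) \<le> t^2 * \<bar>d\<bar>" by (intro mult_left_mono) auto
      also have "t^2 * \<bar>d\<bar> = t * (t * \<bar>d\<bar>)" by (simp add: power2_eq_square)
      also have "\<dots> \<le> t * 1" using td tpos by (intro mult_left_mono) auto
      finally show ?thesis by simp
    qed
    ultimately have "2 * t * A j i + t^2 * d > 0" using tpos by linarith
    hence "qf A n (\<lambda>m. (if m = i then 1 else 0) + t * (if m = j then 1 else 0)) > 0" using q by simp
    thus ?thesis by blast
  qed
  thus ?thesis unfolding A_def n_def .
qed

lemma rot_equiv: "2 \<le> length s \<Longrightarrow> toric_equiv s (rotate m s)"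
proof (induction m)
  case 0 thus ?case unfolding toric_equiv_def by simp
next
  case (Suc m)
  have "toric_step (rotate m s) (rotate1 (rotate m s))"
    unfolding toric_step_def using Suc.prems by simp
  thus ?case using Suc unfolding toric_equiv_def by (simp add: rotate_Suc)
qed

lemma toric_part:
  "2 \<le> length s \<Longrightarrow> \<exists>t. toric_equiv s t \<and> (toric_minimal t \<or> (\<exists>p. t = [-1, p]))"
proof (induction "length s" arbitrary: s rule: less_induct)
  case less
  show ?case
  proof (cases "(-1) \<in> set s")
    case False
    hence "toric_minimal s" unfolding toric_minimal_def by simp
    thus ?thesis unfolding toric_equiv_def by blast
  next
    case True
    show ?thesis
    proof (cases "length s = 2")
      case True2: True
      then obtain a b where s: "s = [a, b]"
        by (metis (no_types) One_nat_def Suc_1 length_0_conv length_Suc_conv)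
      show ?thesis
      proof (cases "a = -1")
        case True
        thus ?thesis using s unfolding toric_equiv_def by blast
      next
        case False
        hence "b = -1" using \<open>(-1) \<in> set s\<close> s by auto
        have "toric_step s (rev s)" unfolding toric_step_def using True2 by simp
        hence "toric_equiv s [-1, a]" unfolding toric_equiv_def using s \<open>b = -1\<close> by auto
        thus ?thesis by blast
      qed
    next
      case False
      hence k3: "3 \<le> length s" using less.prems by simp
      obtain j where j: "j < length s" "s ! j = -1" using True by (metis in_set_conv_nth)
      define r where "r = rotate (Suc j) s"
      have er: "toric_equiv s r" unfolding r_def by (rule rot_equiv[OF less.prems])
      have lr: "length r = length s" unfolding r_def by simp
      have "last r = r ! (length r - 1)" using lr k3 by (intro last_conv_nth) auto
      also have "\<dots> = s ! ((Suc j + (length s - 1)) mod length s)"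
        unfolding lr unfolding r_def by (rule nth_rotate) (use k3 in linarith)
      also have "(Suc j + (length s - 1)) = j + length s" using k3 by simp
      also have "(j + length s) mod length s = j" using j by simp
      finally have lastr: "last r = -1" using j by simp
      obtain a rest where r1: "r = a # rest" using lr k3 by (cases r) auto
      obtain c rs where r2: "rev rest = c # rs" using r1 lr k3 by (cases "rev rest") auto
      obtain b ms' where r3: "rs = b # ms'" using r1 r2 lr k3
        by (cases rs) (auto dest!: arg_cong[of _ _ length])
      define ms where "ms = rev ms'"
      have rest: "rest = ms @ [b, c]" unfolding ms_def
        using r2 r3 by (metis append.assoc append_Cons append_Nil rev.simps(2) rev_rev_ident)
      have c: "c = -1" using lastr r1 rest by simp
      define t where "t = (a + 1) # ms @ [b + 1]"
      have bt: "toric_blowup t = r" unfolding toric_blowup_def t_def using r1 rest c by simp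
      have lt: "length t = length s - 1" using lr r1 rest unfolding t_def by simp
      have st: "toric_step r t" unfolding toric_step_def using bt lr lt k3 by simp
      have "length t < length s" "2 \<le> length t" using lt k3 by auto
      then obtain t' where t': "toric_equiv t t'" "toric_minimal t' \<or> (\<exists>p. t' = [-1, p])"
        using less.hyps by blast
      have "toric_equiv s t'" using er st t' unfolding toric_equiv_def
        by (meson converse_rtranclp_into_rtranclp rtranclp_trans)
      thus ?thesis using t' by blast
    qed
  qed
qed

lemma partB: "degenerate (QD [-1, p]) \<Longrightarrow> p = -4"
proof (rule ccontr)
  assume deg: "degenerate (QD [-1, p])" and p: "p \<noteq> -4"
  let ?s = "[-1, p] :: int list"
  have k: "2 \<le> length ?s" by simp
  from deg have "det (QD ?s) = 0" unfolding degenerate_def .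
  then obtain v where v: "v \<in> carrier_vec (length ?s)" "v \<noteq> 0\<^sub>v (length ?s)" "QD ?s *\<^sub>v v = 0\<^sub>v (length ?s)"
    using det_0_iff_vec_prod_zero[OF QD_carrier[of ?s]] by blast
  have vc: "v \<in> carrier_vec (length ?s)" using v by simp
  have "(QD ?s *\<^sub>v v) $ 0 = 0" "(QD ?s *\<^sub>v v) $ 1 = 0" using v(3) by auto
  hence e: "Lc (sr ?s) (length ?s) (\<lambda>j. v $ j) 0 = 0" "Lc (sr ?s) (length ?s) (\<lambda>j. v $ j) 1 = 0"
    using mulJ[OF k vc, of 0] mulJ[OF k vc, of 1] by auto
  have e0: "- v $ 0 + 2 * v $ 1 = 0" using e(1) unfolding Lc_def sr_def by simp
  have e1: "real_of_int p * v $ 1 + 2 * v $ 0 = 0" using e(2) unfolding Lc_def sr_def by simp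
  have "(real_of_int p + 4) * v $ 1 = 0" using e0 e1 by (simp add: algebra_simps)
  moreover have "real_of_int p + 4 \<noteq> 0" using p by simp
  ultimately have "v $ 1 = 0" by simp
  hence "v $ 0 = 0" using e0 by simp
  have "\<exists>i<length ?s. v $ i \<noteq> 0" by (rule nonzero_vec[OF v(1) v(2)])
  then obtain i where "i < length ?s" "v $ i \<noteq> 0" by blast
  thus False using \<open>v $ 0 = 0\<close> \<open>v $ 1 = 0\<close> by (cases i) (auto simp: less_Suc_eq)
qed


lemma C1:
  assumes k: "2 \<le> length s" and tm: "toric_minimal s"
  shows "b_plus (QD s) \<ge> 1 \<longleftrightarrow> (\<exists>i<length s. s ! i \<ge> 0)"
proof
  assume "\<exists>i<length s. s ! i \<ge> 0"
  then obtain i where "i < length s" "s ! i \<ge> 0" by blast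
  then obtain x where "qf (\<lambda>i j. real_of_int (cyc_entry s i j)) (length s) x > 0"
    using pos_form[OF k] by blast
  hence "\<exists>l>0. poly (char_poly (QD s)) l = 0" by (rule eig_from_form[OF k])
  thus "b_plus (QD s) \<ge> 1" using bplus_iff[OF QD_carrier] by blast
next
  assume "b_plus (QD s) \<ge> 1"
  then obtain l where l: "l > 0" "poly (char_poly (QD s)) l = 0" using bplus_iff[OF QD_carrier] by blast
  show "\<exists>i<length s. s ! i \<ge> 0"
  proof (rule ccontr)
    assume "\<not> (\<exists>i<length s. s ! i \<ge> 0)"
    hence neg: "\<forall>i<length s. s ! i \<le> -2"
    proof (intro allI impI)
      fix i assume "\<not> (\<exists>i<length s. s ! i \<ge> 0)" "i < length s"
      moreover have "s ! i \<noteq> -1" using tm \<open>i < length s\<close> unfolding toric_minimal_def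
        by (metis nth_mem)
      ultimately show "s ! i \<le> -2" by force
    qed
    have "l \<le> 0" by (rule no_pos_eig[OF k neg l(2)])
    thus False using l by simp
  qed
qed

lemma C2:
  assumes k: "2 \<le> length s" and le: "\<forall>i<length s. s ! i \<le> -2" and lt: "\<exists>i<length s. s ! i < -2"
  shows "neg_definite (QD s)"
  unfolding neg_definite_def
proof (intro ballI impI)
  let ?k = "length s"
  have dr: "dim_row (QD s) = ?k" using QD_carrier[of s] by simp
  fix v :: "real vec" assume vc0: "v \<in> carrier_vec (dim_row (QD s))" and vnz0: "v \<noteq> 0\<^sub>v (dim_row (QD s))"
  have vc: "v \<in> carrier_vec ?k" using vc0 dr by simp
  have vnz: "v \<noteq> 0\<^sub>v ?k" using vnz0 dr by simp
  have kp: "0 < ?k" using k by linarith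
  let ?x = "\<lambda>j. v $ j"
  have cond: "\<forall>i<?k. (sr s i + 2) * (?x i)^2 \<le> 0"
  proof (intro allI impI)
    fix i assume "i < ?k"
    hence "s ! i \<le> -2" using le by blast
    hence "sr s i + 2 \<le> 0" unfolding sr_def by simp
    thus "(sr s i + 2) * (?x i)^2 \<le> 0" by (simp add: mult_nonpos_nonneg)
  qed
  show "v \<bullet> (QD s *\<^sub>v v) < 0"
  proof (rule ccontr)
    assume "\<not> v \<bullet> (QD s *\<^sub>v v) < 0"
    hence "Bc (sr s) ?k ?x ?x \<ge> 0" unfolding quadJ[OF k vc] by simp
    from B_eq[OF kp cond this] have eqs: "\<forall>i<?k. ?x i = ?x 0" "\<forall>i<?k. (sr s i + 2) * (?x i)^2 = 0"
      by blast+
    obtain j where j: "j < ?k" "s ! j < -2" using lt by blast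
    have "sr s j + 2 \<noteq> 0" using j(2) unfolding sr_def by simp
    moreover have "(sr s j + 2) * (?x j)^2 = 0" using eqs(2) j(1) by blast
    ultimately have "(?x j)^2 = 0" by simp
    hence "?x j = 0" by simp
    hence "?x 0 = 0" using eqs(1) j(1) by simp
    hence "\<forall>i<?k. ?x i = 0" using eqs(1) by simp
    thus False using nonzero_vec[OF vc vnz] by blast
  qed
qed

lemma C3:
  assumes k: "2 \<le> length s" and eq: "\<forall>i<length s. s ! i = -2"
  shows "neg_semidefinite (QD s) \<and> \<not> neg_definite (QD s)"
proof
  let ?k = "length s"
  have dr: "dim_row (QD s) = ?k" using QD_carrier[of s] by simp
  have kp: "0 < ?k" using k by linarith
  have a2: "\<And>i. i < ?k \<Longrightarrow> sr s i + 2 = 0" using eq unfolding sr_def by simp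
  show "neg_semidefinite (QD s)"
    unfolding neg_semidefinite_def
  proof (intro ballI)
    fix v :: "real vec" assume "v \<in> carrier_vec (dim_row (QD s))"
    hence vc: "v \<in> carrier_vec ?k" using dr by simp
    have "Bc (sr s) ?k (\<lambda>j. v $ j) (\<lambda>j. v $ j) \<le> 0"
      by (rule B_nonpos[OF kp]) (simp add: a2)
    thus "v \<bullet> (QD s *\<^sub>v v) \<le> 0" unfolding quadJ[OF k vc] .
  qed
  show "\<not> neg_definite (QD s)"
  proof
    assume nd: "neg_definite (QD s)"
    define v where "v = vec ?k (\<lambda>_. 1::real)"
    have vc: "v \<in> carrier_vec ?k" unfolding v_def by simp
    have vnz: "v \<noteq> 0\<^sub>v ?k"
    proof
      assume "v = 0\<^sub>v ?k"
      hence "v $ 0 = 0" using kp by simp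
      thus False unfolding v_def using kp by simp
    qed
    have "v \<bullet> (QD s *\<^sub>v v) < 0" using nd vc vnz dr unfolding neg_definite_def by simp
    moreover have "v \<bullet> (QD s *\<^sub>v v) = 0"
    proof -
      have "v \<bullet> (QD s *\<^sub>v v) = Bc (sr s) ?k (\<lambda>j. v $ j) (\<lambda>j. v $ j)" by (rule quadJ[OF k vc])
      also have "\<dots> = (\<Sum>i<?k. (sr s i + 2) * (v $ i)^2) - (\<Sum>i<?k. (v $ i - v $ (Suc i mod ?k))^2)"
        by (rule B_ident[OF kp])
      also have "(\<Sum>i<?k. (sr s i + 2) * (v $ i)^2) = 0" by (simp add: a2)
      also have "(\<Sum>i<?k. (v $ i - v $ (Suc i mod ?k))^2) = 0"
        using kp unfolding v_def by simp
      finally show ?thesis by simp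
    qed
    ultimately show False by simp
  qed
qed

lemma C4:
  assumes k: "2 \<le> length s"
    and c: "(s ! 0 \<ge> 0 \<and> (\<forall>i. 1 \<le> i \<and> i < length s \<longrightarrow> s ! i \<le> -2))
              \<or> (s ! 0 = 0 \<and> s ! 1 = 0 \<and> (\<forall>i. 2 \<le> i \<and> i < length s \<longrightarrow> s ! i \<le> -2))"
  shows "\<not> degenerate (QD s)"
proof
  let ?k = "length s"
  assume "degenerate (QD s)"
  hence "det (QD s) = 0" unfolding degenerate_def .
  then obtain v where v: "v \<in> carrier_vec ?k" "v \<noteq> 0\<^sub>v ?k" "QD s *\<^sub>v v = 0\<^sub>v ?k"
    using det_0_iff_vec_prod_zero[OF QD_carrier[of s]] by blast
  have L0: "\<forall>i<?k. Lc (sr s) ?k (\<lambda>j. v $ j) i = 0"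
  proof (intro allI impI)
    fix i assume i: "i < ?k"
    have "Lc (sr s) ?k (\<lambda>j. v $ j) i = (QD s *\<^sub>v v) $ i" using mulJ[OF k v(1) i] by simp
    also have "\<dots> = 0" using v(3) i by simp
    finally show "Lc (sr s) ?k (\<lambda>j. v $ j) i = 0" .
  qed
  have "\<forall>i<?k. v $ i = 0"
    using c
  proof
    assume h: "s ! 0 \<ge> 0 \<and> (\<forall>i. 1 \<le> i \<and> i < length s \<longrightarrow> s ! i \<le> -2)"
    have a0: "sr s 0 \<ge> 0" using h unfolding sr_def by simp
    have ai: "\<forall>i. 1 \<le> i \<and> i < ?k \<longrightarrow> sr s i \<le> -2"
    proof (intro allI impI)
      fix i assume "1 \<le> i \<and> i < ?k"
      hence "s ! i \<le> -2" using h by blast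
      thus "sr s i \<le> -2" unfolding sr_def by simp
    qed
    show ?thesis using K1[OF k a0 ai L0] .
  next
    assume h: "s ! 0 = 0 \<and> s ! 1 = 0 \<and> (\<forall>i. 2 \<le> i \<and> i < length s \<longrightarrow> s ! i \<le> -2)"
    have a0: "sr s 0 = 0" "sr s 1 = 0" using h unfolding sr_def by simp_all
    have ai: "\<forall>i. 2 \<le> i \<and> i < ?k \<longrightarrow> sr s i \<le> -2"
    proof (intro allI impI)
      fix i assume "2 \<le> i \<and> i < ?k"
      hence "s ! i \<le> -2" using h by blast
      thus "sr s i \<le> -2" unfolding sr_def by simp
    qed
    show ?thesis using K2[OF k a0 ai L0] .
  qed
  thus False using nonzero_vec[OF v(1) v(2)] by blast
qed

theorem lemma2p9:
  shows "(\<forall>s::int list. length s \<ge> 2 \<longrightarrow>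
            (\<exists>t. toric_equiv s t \<and> (toric_minimal t \<or> (\<exists>p. t = [-1, p]))))
    \<and> (\<forall>p::int. degenerate (QD [-1, p]) \<longrightarrow> p = -4)
    \<and> (\<forall>s::int list. length s \<ge> 2 \<and> toric_minimal s \<longrightarrow>
         ((b_plus (QD s) \<ge> 1 \<longleftrightarrow> (\<exists>i<length s. s ! i \<ge> 0))
          \<and> ((\<forall>i<length s. s ! i \<le> -2) \<and> (\<exists>i<length s. s ! i < -2) \<longrightarrow> neg_definite (QD s))
          \<and> ((\<forall>i<length s. s ! i = -2) \<longrightarrow> neg_semidefinite (QD s) \<and> \<not> neg_definite (QD s))
          \<and> ((s ! 0 \<ge> 0 \<and> (\<forall>i. 1 \<le> i \<and> i < length s \<longrightarrow> s ! i \<le> -2))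
              \<or> (s ! 0 = 0 \<and> s ! 1 = 0 \<and> (\<forall>i. 2 \<le> i \<and> i < length s \<longrightarrow> s ! i \<le> -2))
              \<longrightarrow> \<not> degenerate (QD s))))"
proof -
  have A: "\<forall>s::int list. length s \<ge> 2 \<longrightarrow>
            (\<exists>t. toric_equiv s t \<and> (toric_minimal t \<or> (\<exists>p. t = [-1, p])))"
    using toric_part by blast
  have B: "\<forall>p::int. degenerate (QD [-1, p]) \<longrightarrow> p = -4" using partB by blast
  have C: "\<forall>s::int list. length s \<ge> 2 \<and> toric_minimal s \<longrightarrow>
         ((b_plus (QD s) \<ge> 1 \<longleftrightarrow> (\<exists>i<length s. s ! i \<ge> 0))
          \<and> ((\<forall>i<length s. s ! i \<le> -2) \<and> (\<exists>i<length s. s ! i < -2) \<longrightarrow> neg_definite (QD s))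
          \<and> ((\<forall>i<length s. s ! i = -2) \<longrightarrow> neg_semidefinite (QD s) \<and> \<not> neg_definite (QD s))
          \<and> ((s ! 0 \<ge> 0 \<and> (\<forall>i. 1 \<le> i \<and> i < length s \<longrightarrow> s ! i \<le> -2))
              \<or> (s ! 0 = 0 \<and> s ! 1 = 0 \<and> (\<forall>i. 2 \<le> i \<and> i < length s \<longrightarrow> s ! i \<le> -2))
              \<longrightarrow> \<not> degenerate (QD s)))"
  proof (intro allI impI)
    fix s :: "int list"
    assume h: "length s \<ge> 2 \<and> toric_minimal s"
    hence k: "2 \<le> length s" and tm: "toric_minimal s" by auto
    show "(b_plus (QD s) \<ge> 1 \<longleftrightarrow> (\<exists>i<length s. s ! i \<ge> 0))
          \<and> ((\<forall>i<length s. s ! i \<le> -2) \<and> (\<exists>i<length s. s ! i < -2) \<longrightarrow> neg_definite (QD s))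
          \<and> ((\<forall>i<length s. s ! i = -2) \<longrightarrow> neg_semidefinite (QD s) \<and> \<not> neg_definite (QD s))
          \<and> ((s ! 0 \<ge> 0 \<and> (\<forall>i. 1 \<le> i \<and> i < length s \<longrightarrow> s ! i \<le> -2))
              \<or> (s ! 0 = 0 \<and> s ! 1 = 0 \<and> (\<forall>i. 2 \<le> i \<and> i < length s \<longrightarrow> s ! i \<le> -2))
              \<longrightarrow> \<not> degenerate (QD s))"
      using C1[OF k tm] C2[OF k] C3[OF k] C4[OF k] by blast
  qed
  show ?thesis using A B C by blast
qed

end
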